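(* There exist an alphabet $\Sigma$, a set $D\subseteq\Sigma^\omega$ of don't care words with trivial right-congruence, and a DBA $\mathcal{A}$ with informative right-congruence such that there are several pairwise non-isomorphic $D$-minimal DBAs $\mathcal{B}$ with $L(\mathcal{B})\equiv_D L(\mathcal{A})$, and such that some $D$-minimal DBA $\mathcal{B}$ with $L(\mathcal{B})\equiv_D L(\mathcal{A})$ does not have informative right-congruence.
   Context: A DBA $(\Sigma,Q,\delta,q_0,F)$ is a finite deterministic transition system (all states reachable) with $F\subseteq Q$, accepting $\alpha\in\Sigma^\omega$ iff a state of $F$ is visited infinitely often in the run on $\alpha$. $L\equiv_D L'$ means $L\setminus D=L'\setminus D$. A DBA $\mathcal{B}$ is $D$-minimal (for the language $L(\mathcal{B})$ up to $\equiv_D$) if no DBA with fewer states accepts a language $D$-equivalent to $L(\mathcal{B})$. For $L\subseteq\Sigma^\omega$, $u\sim_L v$ iff for all $\alpha\in\Sigma^\omega$: $u\alpha\in L\iff v\alpha\in L$; $D$ has trivial right-congruence if $\sim_D$ has one class. An automaton accepting $L$ has informative right-congruence if its transition system is isomorphic to the transition system induced by $\sim_L$ (states the classes $[u]$, initial $[\epsilon]$, transitions $[u]\xrightarrow{\sigma}[u\sigma]$). *)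

theory Defs
  imports Main "HOL-Library.Infinite_Set"
begin

text \<open>States of automata are natural numbers (any finite state set can be encoded this way),
 so quantifying over DBAs with state sets of type nat set covers all DBAs up to isomorphism.\<close>

type_synonym letter = nat

definition omega_words :: "letter set \<Rightarrow> (nat \<Rightarrow> letter) set" where
  "omega_words \<Sigma> = {\<alpha>. \<forall>i. \<alpha> i \<in> \<Sigma>}"

record dba =
  states :: "nat set"
  trans  :: "nat \<Rightarrow> letter \<Rightarrow> nat"
  init   :: nat
  final  :: "nat set"

definition delta_star :: "dba \<Rightarrow> nat \<Rightarrow> letter list \<Rightarrow> nat" where
  "delta_star A q u = fold (\<lambda>a p. trans A p a) u q"

definition wf_dba :: "letter set \<Rightarrow> dba \<Rightarrow> bool" where
  "wf_dba \<Sigma> A \<longleftrightarrow> finite (states A) \<and> init A \<in> states A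
     \<and> (\<forall>q\<in>states A. \<forall>a\<in>\<Sigma>. trans A q a \<in> states A)
     \<and> final A \<subseteq> states A
     \<and> (\<forall>q\<in>states A. \<exists>u\<in>lists \<Sigma>. delta_star A (init A) u = q)"

primrec run :: "dba \<Rightarrow> (nat \<Rightarrow> letter) \<Rightarrow> nat \<Rightarrow> nat" where
  "run A \<alpha> 0 = init A"
| "run A \<alpha> (Suc i) = trans A (run A \<alpha> i) (\<alpha> i)"

definition lang :: "letter set \<Rightarrow> dba \<Rightarrow> (nat \<Rightarrow> letter) set" where
  "lang \<Sigma> A = {\<alpha> \<in> omega_words \<Sigma>. \<exists>\<^sub>\<infinity> i. run A \<alpha> i \<in> final A}"

definition equiv_D :: "(nat \<Rightarrow> letter) set \<Rightarrow> (nat \<Rightarrow> letter) set \<Rightarrow> (nat \<Rightarrow> letter) set \<Rightarrow> bool" where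
  "equiv_D D L L' \<longleftrightarrow> L - D = L' - D"

definition D_minimal :: "letter set \<Rightarrow> (nat \<Rightarrow> letter) set \<Rightarrow> dba \<Rightarrow> bool" where
  "D_minimal \<Sigma> D B \<longleftrightarrow> wf_dba \<Sigma> B \<and>
     (\<forall>B'. wf_dba \<Sigma> B' \<and> card (states B') < card (states B) \<longrightarrow>
            \<not> equiv_D D (lang \<Sigma> B') (lang \<Sigma> B))"

definition dba_iso :: "dba \<Rightarrow> dba \<Rightarrow> letter set \<Rightarrow> bool" where
  "dba_iso A B \<Sigma> \<longleftrightarrow> (\<exists>h. bij_betw h (states A) (states B) \<and> h (init A) = init B
     \<and> (\<forall>q\<in>states A. \<forall>a\<in>\<Sigma>. h (trans A q a) = trans B (h q) a)
     \<and> (\<forall>q\<in>states A. q \<in> final A \<longleftrightarrow> h q \<in> final B))"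

definition prepend :: "letter list \<Rightarrow> (nat \<Rightarrow> letter) \<Rightarrow> (nat \<Rightarrow> letter)" where
  "prepend u \<alpha> = (\<lambda>i. if i < length u then u ! i else \<alpha> (i - length u))"

definition right_cong :: "letter set \<Rightarrow> (nat \<Rightarrow> letter) set \<Rightarrow> letter list \<Rightarrow> letter list \<Rightarrow> bool" where
  "right_cong \<Sigma> L u v \<longleftrightarrow> (\<forall>\<alpha>\<in>omega_words \<Sigma>. prepend u \<alpha> \<in> L \<longleftrightarrow> prepend v \<alpha> \<in> L)"

definition trivial_right_cong :: "letter set \<Rightarrow> (nat \<Rightarrow> letter) set \<Rightarrow> bool" where
  "trivial_right_cong \<Sigma> L \<longleftrightarrow> (\<forall>u\<in>lists \<Sigma>. \<forall>v\<in>lists \<Sigma>. right_cong \<Sigma> L u v)"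

text \<open>Transition system induced by \<sim>_L: states are the classes [u] (u \<in> \<Sigma>*), initial [\<epsilon>],
  transitions [u] --a--> [ua] (well defined since \<sim>_L is a right congruence).\<close>
definition rc_class :: "letter set \<Rightarrow> (nat \<Rightarrow> letter) set \<Rightarrow> letter list \<Rightarrow> letter list set" where
  "rc_class \<Sigma> L u = {v \<in> lists \<Sigma>. right_cong \<Sigma> L u v}"

definition rc_classes :: "letter set \<Rightarrow> (nat \<Rightarrow> letter) set \<Rightarrow> letter list set set" where
  "rc_classes \<Sigma> L = rc_class \<Sigma> L ` lists \<Sigma>"

definition rc_step :: "letter set \<Rightarrow> (nat \<Rightarrow> letter) set \<Rightarrow> letter list set \<Rightarrow> letter \<Rightarrow> letter list set" where
  "rc_step \<Sigma> L C a = rc_class \<Sigma> L ((SOME u. u \<in> C) @ [a])"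

definition informative_rc :: "letter set \<Rightarrow> dba \<Rightarrow> bool" where
  "informative_rc \<Sigma> A \<longleftrightarrow> (\<exists>h. bij_betw h (states A) (rc_classes \<Sigma> (lang \<Sigma> A))
     \<and> h (init A) = rc_class \<Sigma> (lang \<Sigma> A) []
     \<and> (\<forall>q\<in>states A. \<forall>a\<in>\<Sigma>. h (trans A q a) = rc_step \<Sigma> (lang \<Sigma> A) (h q) a))"

end

theory Submission
  imports Defs
begin

lemma INFM_shift: "(INFM i. P (i + k)) \<longleftrightarrow> (INFM i::nat. P i)"
proof
  assume "INFM i. P (i + k)"
  then show "INFM i. P i" unfolding INFM_nat_le
    by (metis le_add1 order_trans)
next
  assume h: "INFM i. P i"
  show "INFM i. P (i + k)" unfolding INFM_nat_le
  proof
    fix m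
    from h obtain n where "n \<ge> m + k" "P n" unfolding INFM_nat_le by blast
    then show "\<exists>n\<ge>m. P (n + k)" by (intro exI[of _ "n - k"]) auto
  qed
qed

lemma INFM_Suc_iff: "(INFM i. P (Suc i)) \<longleftrightarrow> (INFM i::nat. P i)"
  using INFM_shift[of P 1] by simp

lemma delta_star_snoc: "delta_star A q (xs @ [a]) = trans A (delta_star A q xs) a"
  by (simp add: delta_star_def)

lemma delta_star_Cons: "delta_star A q (a # xs) = delta_star A (trans A q a) xs"
  by (simp add: delta_star_def)

lemma prepend_shift: "prepend u \<alpha> (i + length u) = \<alpha> i"
  by (simp add: prepend_def)

lemma prepend_omega: "u \<in> lists \<Sigma> \<Longrightarrow> \<alpha> \<in> omega_words \<Sigma> \<Longrightarrow> prepend u \<alpha> \<in> omega_words \<Sigma>"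
  by (auto simp: omega_words_def prepend_def)

lemma run_prefix: "j \<le> length u \<Longrightarrow> run A (prepend u \<alpha>) j = delta_star A (init A) (take j u)"
proof (induction j)
  case 0
  then show ?case by (simp add: delta_star_def)
next
  case (Suc j)
  then have "j < length u" by simp
  then have "take (Suc j) u = take j u @ [u ! j]" by (simp add: take_Suc_conv_app_nth)
  with Suc show ?case by (simp add: delta_star_snoc prepend_def)
qed

lemma run_prepend:
  "run A (prepend u \<alpha>) (i + length u) = run (A\<lparr>init := delta_star A (init A) u\<rparr>) \<alpha> i"
proof (induction i)
  case 0
  then show ?case using run_prefix[of "length u" u A \<alpha>] by simp
next
  case (Suc i)
  then show ?case by (simp add: prepend_shift)
qed

lemma lang_prepend:
  assumes "u \<in> lists \<Sigma>" "\<alpha> \<in> omega_words \<Sigma>"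
  shows "prepend u \<alpha> \<in> lang \<Sigma> A \<longleftrightarrow>
     (INFM i. run (A\<lparr>init := delta_star A (init A) u\<rparr>) \<alpha> i \<in> final A)"
proof -
  have "(INFM i. run A (prepend u \<alpha>) i \<in> final A) \<longleftrightarrow>
        (INFM i. run A (prepend u \<alpha>) (i + length u) \<in> final A)"
    using INFM_shift[of "\<lambda>i. run A (prepend u \<alpha>) i \<in> final A" "length u"] by simp
  then show ?thesis using prepend_omega[OF assms] by (simp add: lang_def run_prepend)
qed

definition Sig :: "letter set" where "Sig = {0,1,2}"
definition DD :: "(nat \<Rightarrow> letter) set" where "DD = {\<alpha> \<in> omega_words Sig. INFM i. \<alpha> i = 2}"
definition tA :: "nat \<Rightarrow> letter \<Rightarrow> nat" where
  "tA q a = (if a = 0 then 1 else if a = 1 then 0 else q)"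
definition tB :: "nat \<Rightarrow> letter \<Rightarrow> nat" where
  "tB q a = (if a = 0 then 1 else 0)"
definition AA :: dba where "AA = \<lparr>states = {0,1}, trans = tA, init = 0, final = {1}\<rparr>"
definition B1 :: dba where "B1 = \<lparr>states = {0,1}, trans = tB, init = 0, final = {1}\<rparr>"
definition B2 :: dba where "B2 = \<lparr>states = {0,1}, trans = tB, init = 1, final = {1}\<rparr>"


lemma Sig_simps: "finite Sig" "Sig \<noteq> {}" by (auto simp: Sig_def)

lemma const_omega: "a \<in> Sig \<Longrightarrow> (\<lambda>_. a) \<in> omega_words Sig"
  by (simp add: omega_words_def)

lemma runB_Suc: "trans R = tB \<Longrightarrow> run R \<alpha> (Suc i) = (if \<alpha> i = 0 then 1 else 0)"
  by (simp add: tB_def)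

lemma runB: "trans R = tB \<Longrightarrow> (INFM i. run R \<alpha> i \<in> {1}) \<longleftrightarrow> (INFM i. \<alpha> i = 0)"
proof -
  assume t: "trans R = tB"
  have "(INFM i. run R \<alpha> i \<in> {1}) \<longleftrightarrow> (INFM i. run R \<alpha> (Suc i) \<in> {1})"
    using INFM_Suc_iff[of "\<lambda>i. run R \<alpha> i \<in> {1}"] by simp
  also have "\<dots> \<longleftrightarrow> (INFM i. \<alpha> i = 0)" using runB_Suc[OF t] by simp
  finally show ?thesis .
qed

lemma lang_B: "trans R = tB \<Longrightarrow> final R = {1} \<Longrightarrow>
   lang Sig R = {\<alpha> \<in> omega_words Sig. INFM i. \<alpha> i = 0}"
  unfolding lang_def using runB[of R] by auto

lemma prepend_DD: "u \<in> lists Sig \<Longrightarrow> \<alpha> \<in> omega_words Sig \<Longrightarrow>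
   prepend u \<alpha> \<in> DD \<longleftrightarrow> (INFM i. \<alpha> i = 2)"
  using prepend_omega[of u Sig \<alpha>] INFM_shift[of "\<lambda>i. prepend u \<alpha> i = 2" "length u"]
  by (simp add: DD_def prepend_shift)

lemma triv_DD: "trivial_right_cong Sig DD"
  unfolding trivial_right_cong_def right_cong_def using prepend_DD by simp

lemma AA_vs_B:
  assumes "\<alpha> \<in> omega_words Sig" "\<not> (INFM i. \<alpha> i = 2)"
  shows "(INFM i. run AA \<alpha> i \<in> {1}) \<longleftrightarrow> (INFM i. \<alpha> i = 0)"
proof -
  have rs: "run AA \<alpha> (Suc i) = tA (run AA \<alpha> i) (\<alpha> i)" for i by (simp add: AA_def)
  have "(INFM i. run AA \<alpha> i \<in> {1}) \<longleftrightarrow> (INFM i. run AA \<alpha> (Suc i) \<in> {1})"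
    using INFM_Suc_iff[of "\<lambda>i. run AA \<alpha> i \<in> {1}"] by simp
  also have "\<dots> \<longleftrightarrow> (INFM i. \<alpha> i = 0)"
  proof
    assume h: "INFM i. run AA \<alpha> (Suc i) \<in> {1}"
    have m: "MOST i. \<alpha> i \<noteq> 2" using assms(2) by simp
    have "MOST i. \<alpha> i = 0 \<or> \<alpha> i = 1"
      by (rule MOST_mono[OF m]) (use assms(1) in \<open>auto simp: omega_words_def Sig_def\<close>)
    from INFM_conjI[OF h this] show "INFM i. \<alpha> i = 0"
      by (rule INFM_mono) (auto simp: AA_def tA_def)
  next
    assume "INFM i. \<alpha> i = 0"
    then show "INFM i. run AA \<alpha> (Suc i) \<in> {1}"
      by (rule INFM_mono) (simp add: AA_def tA_def)
  qed
  finally show ?thesis .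
qed

lemma equiv_AB: "trans R = tB \<Longrightarrow> final R = {1} \<Longrightarrow> equiv_D DD (lang Sig R) (lang Sig AA)"
  unfolding equiv_D_def
  using lang_B[of R] AA_vs_B by (auto simp: lang_def DD_def AA_def)

lemma one_state:
  assumes "wf_dba Sig R" "card (states R) < 2"
  shows "lang Sig R = omega_words Sig \<or> lang Sig R = {}"
proof -
  have f: "finite (states R)" and i: "init R \<in> states R" using assms(1) by (auto simp: wf_dba_def)
  then have "card (states R) \<noteq> 0" by auto
  with assms(2) have "card (states R) = 1" by simp
  then obtain q where q: "states R = {q}" by (rule card_1_singletonE)
  have tr: "\<forall>p\<in>states R. \<forall>a\<in>Sig. trans R p a \<in> states R" using assms(1) by (simp add: wf_dba_def)
  have r: "run R \<alpha> i = q" if "\<alpha> \<in> omega_words Sig" for \<alpha> i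
  proof (induction i)
    case 0 then show ?case using i q by simp
  next
    case (Suc i)
    have "\<alpha> i \<in> Sig" using that by (simp add: omega_words_def)
    then show ?case using Suc tr q by auto
  qed
  show ?thesis
  proof (cases "q \<in> final R")
    case True
    then show ?thesis using r by (auto simp: lang_def)
  next
    case False
    then show ?thesis using r by (auto simp: lang_def)
  qed
qed

lemma Dmin_B:
  assumes "trans R = tB" "final R = {1}" "states R = {0,1}" "init R \<in> {0,1}"
  shows "D_minimal Sig DD R"
  unfolding D_minimal_def
proof (intro conjI allI impI)
  show "wf_dba Sig R"
    unfolding wf_dba_def
  proof (intro conjI ballI)
    fix p assume "p \<in> states R"
    then have "p = 0 \<or> p = 1" using assms by auto
    then show "\<exists>u\<in>lists Sig. delta_star R (init R) u = p"
    proof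
      assume "p = 0"
      then show ?thesis using assms(4)
        by (cases "init R = 0") (auto intro!: bexI[of _ "[]"] bexI[of _ "[1]"]
            simp: delta_star_def assms(1) tB_def Sig_def)
    next
      assume "p = 1"
      then show ?thesis
        by (auto intro!: bexI[of _ "[0]"] simp: delta_star_def assms(1) tB_def Sig_def)
    qed
  qed (use assms in \<open>auto simp: tB_def\<close>)
next
  fix R' assume h: "wf_dba Sig R' \<and> card (states R') < card (states R)"
  then have "lang Sig R' = omega_words Sig \<or> lang Sig R' = {}"
    using one_state[of R'] assms(3) by simp
  moreover have z: "(\<lambda>_. 0) \<in> lang Sig R - DD"
    using lang_B[OF assms(1,2)] const_omega[of 0] by (auto simp: Sig_def DD_def)
  moreover have o: "(\<lambda>_. 1) \<notin> lang Sig R" "(\<lambda>_. 1) \<notin> DD" "(\<lambda>_. 1::nat) \<in> omega_words Sig"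
    using lang_B[OF assms(1,2)] const_omega[of 1] by (auto simp: Sig_def DD_def)
  ultimately show "\<not> equiv_D DD (lang Sig R') (lang Sig R)"
    unfolding equiv_D_def by blast
qed


lemma wf_AA: "wf_dba Sig AA"
  unfolding wf_dba_def
proof (intro conjI ballI)
  fix p assume "p \<in> states AA"
  then have "p = 0 \<or> p = 1" by (auto simp: AA_def)
  then show "\<exists>u\<in>lists Sig. delta_star AA (init AA) u = p"
  proof
    assume "p = 0" then show ?thesis
      by (intro bexI[of _ "[]"]) (auto simp: delta_star_def AA_def)
  next
    assume "p = 1" then show ?thesis
      by (intro bexI[of _ "[0]"]) (auto simp: delta_star_def AA_def tA_def Sig_def)
  qed
qed (auto simp: AA_def tA_def)

lemma dsA: "q \<in> {0,1} \<Longrightarrow> delta_star AA q u \<in> {0,1}"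
proof (induction u arbitrary: q)
  case Nil
  then show ?case by (simp add: delta_star_def)
next
  case (Cons a u)
  have "trans AA q a \<in> {0,1}" using Cons.prems by (simp add: AA_def tA_def)
  then show ?case using Cons.IH by (simp only: delta_star_Cons)
qed

lemma runA_const: "run (AA\<lparr>init := q\<rparr>) (\<lambda>_. 2) i = q"
  by (induction i) (auto simp: AA_def tA_def)

lemma rc_AA:
  assumes "u \<in> lists Sig" "v \<in> lists Sig"
  shows "right_cong Sig (lang Sig AA) u v \<longleftrightarrow> delta_star AA 0 u = delta_star AA 0 v"
proof
  assume h: "right_cong Sig (lang Sig AA) u v"
  have "(\<lambda>_. 2::nat) \<in> omega_words Sig" by (rule const_omega) (simp add: Sig_def)
  with h have "prepend u (\<lambda>_. 2) \<in> lang Sig AA \<longleftrightarrow> prepend v (\<lambda>_. 2) \<in> lang Sig AA"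
    by (simp add: right_cong_def)
  then have "delta_star AA 0 u = 1 \<longleftrightarrow> delta_star AA 0 v = 1"
    using assms `(\<lambda>_. 2::nat) \<in> omega_words Sig`
    by (simp add: lang_prepend runA_const) (simp add: AA_def)
  then show "delta_star AA 0 u = delta_star AA 0 v"
    using dsA[of 0 u] dsA[of 0 v] by auto
next
  assume "delta_star AA 0 u = delta_star AA 0 v"
  then show "right_cong Sig (lang Sig AA) u v"
    using assms by (simp add: right_cong_def lang_prepend) (simp add: AA_def)
qed

lemma rc_class_eq: "right_cong \<Sigma> L u v \<Longrightarrow> rc_class \<Sigma> L u = rc_class \<Sigma> L v"
  unfolding rc_class_def right_cong_def by auto

lemma rc_refl: "right_cong \<Sigma> L u u"
  unfolding right_cong_def by auto

definition rep :: "nat \<Rightarrow> letter list" where "rep q = (if q = 0 then [] else [0])"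

lemma rep_ok: "q \<in> {0,1} \<Longrightarrow> rep q \<in> lists Sig \<and> delta_star AA 0 (rep q) = q"
  by (auto simp: rep_def Sig_def delta_star_def AA_def tA_def)

lemma informative_AA: "informative_rc Sig AA"
proof -
  let ?L = "lang Sig AA"
  define h where "h q = rc_class Sig ?L (rep q)" for q
  have cls: "rc_class Sig ?L u = h (delta_star AA 0 u)" if "u \<in> lists Sig" for u
  proof -
    have d: "delta_star AA 0 u \<in> {0,1}" by (rule dsA) simp
    show ?thesis unfolding h_def
      by (rule rc_class_eq) (use rc_AA[OF that] rep_ok[OF d] in simp)
  qed
  have mem: "v \<in> h q \<longleftrightarrow> v \<in> lists Sig \<and> delta_star AA 0 v = q" if "q \<in> {0,1}" for q v
    using rep_ok[OF that] rc_AA[of "rep q" v] unfolding h_def rc_class_def by auto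
  have inj: "inj_on h {0,1}"
  proof (rule inj_onI)
    fix p q assume "p \<in> {0::nat,1}" "q \<in> {0::nat,1}" "h p = h q"
    then show "p = q" using mem[of p "rep p"] mem[of q "rep p"] rep_ok[of p] by auto
  qed
  have img: "h ` {0,1} = rc_classes Sig ?L"
    unfolding rc_classes_def
  proof
    show "h ` {0, 1} \<subseteq> rc_class Sig ?L ` lists Sig"
      using rep_ok unfolding h_def by auto
    show "rc_class Sig ?L ` lists Sig \<subseteq> h ` {0, 1}"
    proof
      fix C assume "C \<in> rc_class Sig ?L ` lists Sig"
      then obtain u where u: "u \<in> lists Sig" "C = rc_class Sig ?L u" by blast
      have "delta_star AA 0 u \<in> {0,1}" by (rule dsA) simp
      then show "C \<in> h ` {0, 1}" using cls[OF u(1)] u(2) by blast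
    qed
  qed
  have step: "h (trans AA q a) = rc_step Sig ?L (h q) a" if "q \<in> states AA" "a \<in> Sig" for q a
  proof -
    have q: "q \<in> {0,1}" using that by (simp add: AA_def)
    define w where "w = (SOME u. u \<in> h q)"
    have "rep q \<in> h q" using mem[OF q] rep_ok[OF q] by simp
    then have "w \<in> h q" unfolding w_def by (rule someI)
    then have w: "w \<in> lists Sig" "delta_star AA 0 w = q" using mem[OF q] by auto
    have "rc_step Sig ?L (h q) a = rc_class Sig ?L (w @ [a])"
      unfolding rc_step_def w_def ..
    also have "\<dots> = h (delta_star AA 0 (w @ [a]))" using w that by (intro cls) auto
    also have "\<dots> = h (trans AA q a)" using w by (simp add: delta_star_snoc)
    finally show ?thesis by simp
  qed
  show ?thesis unfolding informative_rc_def
  proof (intro exI[of _ h] conjI ballI)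
    show "bij_betw h (states AA) (rc_classes Sig ?L)"
      using inj img by (simp add: bij_betw_def AA_def)
    show "h (init AA) = rc_class Sig ?L []" by (simp add: h_def rep_def AA_def)
  qed (rule step)
qed

lemma not_inf_B1: "\<not> informative_rc Sig B1"
proof
  let ?L = "lang Sig B1"
  assume "informative_rc Sig B1"
  then obtain h where b: "bij_betw h (states B1) (rc_classes Sig ?L)"
    unfolding informative_rc_def by blast
  have "right_cong Sig ?L u []" if "u \<in> lists Sig" for u
    unfolding right_cong_def
  proof (intro ballI)
    fix \<alpha> :: "nat \<Rightarrow> letter" assume a: "\<alpha> \<in> omega_words Sig"
    have e: "final B1 = {1}" by (simp add: B1_def)
    show "prepend u \<alpha> \<in> ?L \<longleftrightarrow> prepend [] \<alpha> \<in> ?L"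
      using lang_prepend[OF that a, of B1] lang_prepend[of "[]" Sig \<alpha> B1] a
        runB[of "B1\<lparr>init := delta_star B1 (init B1) u\<rparr>" \<alpha>]
        runB[of "B1\<lparr>init := delta_star B1 (init B1) []\<rparr>" \<alpha>]
      by (simp add: e) (simp add: B1_def)
  qed
  then have "rc_classes Sig ?L = {rc_class Sig ?L []}"
    unfolding rc_classes_def using rc_class_eq by fastforce
  with b have "card (states B1) = card {rc_class Sig ?L []}" by (simp add: bij_betw_same_card)
  then show False by (simp add: B1_def)
qed

lemma not_iso: "\<not> dba_iso B1 B2 Sig"
  unfolding dba_iso_def B1_def B2_def by auto

theorem proposition2:
  shows "\<exists>(\<Sigma>::letter set) D A. finite \<Sigma> \<and> \<Sigma> \<noteq> {} \<and> D \<subseteq> omega_words \<Sigma>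
     \<and> trivial_right_cong \<Sigma> D \<and> wf_dba \<Sigma> A \<and> informative_rc \<Sigma> A
     \<and> (\<exists>B1 B2. D_minimal \<Sigma> D B1 \<and> equiv_D D (lang \<Sigma> B1) (lang \<Sigma> A)
              \<and> D_minimal \<Sigma> D B2 \<and> equiv_D D (lang \<Sigma> B2) (lang \<Sigma> A)
              \<and> \<not> dba_iso B1 B2 \<Sigma>)
     \<and> (\<exists>B. D_minimal \<Sigma> D B \<and> equiv_D D (lang \<Sigma> B) (lang \<Sigma> A) \<and> \<not> informative_rc \<Sigma> B)"
proof (intro exI conjI)
  show "finite Sig" "Sig \<noteq> {}" by (rule Sig_simps)+
  show "DD \<subseteq> omega_words Sig" by (auto simp: DD_def)
  show "trivial_right_cong Sig DD" by (rule triv_DD)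
  show "wf_dba Sig AA" by (rule wf_AA)
  show "informative_rc Sig AA" by (rule informative_AA)
  show "D_minimal Sig DD B1" "D_minimal Sig DD B2" "D_minimal Sig DD B1"
    by (rule Dmin_B; simp add: B1_def B2_def)+
  show "equiv_D DD (lang Sig B1) (lang Sig AA)" "equiv_D DD (lang Sig B2) (lang Sig AA)"
     "equiv_D DD (lang Sig B1) (lang Sig AA)"
    by (rule equiv_AB; simp add: B1_def B2_def)+
  show "\<not> dba_iso B1 B2 Sig" by (rule not_iso)
  show "\<not> informative_rc Sig B1" by (rule not_inf_B1)
qed

end
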